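(* Let $q\in[u]$ be a key and $\ell\ge0$ an integer. If the run containing position $h(q)$ has length $r\in[2^{\ell+2},2^{\ell+3})$, then at least one of the following (at most 12) consecutive $\ell$-intervals is near-full: the $\ell$-interval containing $h(q)$, the 8 nearest $\ell$-intervals to its left, and the 3 nearest $\ell$-intervals to its right.
   Context: Let $[s]=\{0,\dots,s-1\}$. Linear probing: fix a table size $t$ and a hash function $h:[u]\to[t]$. Positions are indexed by nonnegative integers (wrap-around is ignored, so positions beyond $t-1$ may be used), each either empty or holding one key. Starting from an empty table, the keys of a set $S\subseteq[u]$ are inserted one by one; a key $x$ is inserted by scanning positions $h(x),h(x)+1,\dots$ and placing $x$ in the first empty one. A run is a maximal interval of consecutive filled positions. For an integer $\ell\ge 0$, an $\ell$-interval is a set of positions $[i2^\ell,(i+1)2^\ell)$ for an integer $i\ge 0$. Given a query key $q\in[u]$ (which may or may not belong to $S$), an $\ell$-interval $I$ is called near-full if at least $\frac34 2^\ell$ keys $x\in S\setminus\{q\}$ satisfy $h(x)\in I$. *)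

theory Defs
  imports Complex_Main
begin

text \<open>Linear probing without wrap-around. A table state is the set of filled positions
  (positions are natural numbers).\<close>

definition first_empty :: "nat set \<Rightarrow> nat \<Rightarrow> nat" where
  "first_empty F s = (LEAST p. s \<le> p \<and> p \<notin> F)"

definition filled :: "(nat \<Rightarrow> nat) \<Rightarrow> nat list \<Rightarrow> nat set" where
  "filled h xs = foldl (\<lambda>F x. insert (first_empty F (h x)) F) {} xs"

definition is_run :: "nat set \<Rightarrow> nat \<Rightarrow> nat \<Rightarrow> bool" where
  "is_run F a b \<longleftrightarrow> a < b \<and> {a..<b} \<subseteq> F \<and> (a = 0 \<or> a - 1 \<notin> F) \<and> b \<notin> F"

definition l_interval :: "nat \<Rightarrow> nat \<Rightarrow> nat set" where
  "l_interval l i = {i * 2^l ..< (i + 1) * 2^l}"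

definition near_full :: "(nat \<Rightarrow> nat) \<Rightarrow> nat set \<Rightarrow> nat \<Rightarrow> nat \<Rightarrow> nat set \<Rightarrow> bool" where
  "near_full h S q l I \<longleftrightarrow> real (card {x \<in> S - {q}. h x \<in> I}) \<ge> 3 / 4 * 2 ^ l"

end

theory Submission
  imports Defs
begin

lemma filled_snoc: "filled h (xs @ [x]) = insert (first_empty (filled h xs) (h x)) (filled h xs)"
  by (simp add: filled_def)

lemma first_empty_props:
  assumes "finite F"
  shows "s \<le> first_empty F s \<and> first_empty F s \<notin> F \<and> {s..<first_empty F s} \<subseteq> F"
proof -
  obtain p where p: "s \<le> p \<and> p \<notin> F"
    using assms by (metis ex_new_if_finite infinite_Ici le_cases subset_eq atLeast_iff
          finite_subset) 
  have 1: "s \<le> first_empty F s \<and> first_empty F s \<notin> F"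
    unfolding first_empty_def by (rule LeastI[of _ p]) (use p in auto)
  have 2: "{s..<first_empty F s} \<subseteq> F"
  proof
    fix y assume "y \<in> {s..<first_empty F s}"
    then show "y \<in> F" unfolding first_empty_def using not_less_Least by fastforce
  qed
  show ?thesis using 1 2 by blast
qed

lemma invariant:
  assumes "distinct xs"
  shows "\<exists>P. P ` set xs = filled h xs \<and> inj_on P (set xs) \<and>
     (\<forall>x\<in>set xs. h x \<le> P x \<and> {h x..<P x} \<subseteq> filled h xs)"
  using assms
proof (induction xs rule: rev_induct)
  case Nil
  then show ?case by (simp add: filled_def)
next
  case (snoc x xs)
  then obtain P where P: "P ` set xs = filled h xs" "inj_on P (set xs)"
     "\<forall>y\<in>set xs. h y \<le> P y \<and> {h y..<P y} \<subseteq> filled h xs" by auto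
  have xn: "x \<notin> set xs" using snoc.prems by simp
  define F where "F = filled h xs"
  have fin: "finite F" unfolding F_def using P(1) by (metis finite_set finite_imageI)
  define p where "p = first_empty F (h x)"
  have pp: "h x \<le> p" "p \<notin> F" "{h x..<p} \<subseteq> F"
    using first_empty_props[OF fin, of "h x"] unfolding p_def by auto
  have Fs: "filled h (xs @ [x]) = insert p F" unfolding F_def p_def filled_snoc by simp
  define P' where "P' = P(x := p)"
  have "P' ` set (xs @ [x]) = insert p (P ` set xs)"
    unfolding P'_def using xn by auto
  moreover have "inj_on P' (set (xs @ [x]))"
    unfolding P'_def using xn P(1,2) pp(2) unfolding F_def
    by (auto simp: inj_on_def)
  moreover have "\<forall>y\<in>set (xs@[x]). h y \<le> P' y \<and> {h y..<P' y} \<subseteq> filled h (xs@[x])"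
    unfolding P'_def Fs using P(3) pp xn unfolding F_def by auto
  ultimately show ?case unfolding Fs F_def using P(1) by metis
qed

lemma run_count:
  assumes "distinct xs" "set xs = S"
    and sub: "{a..<p} \<subseteq> filled h xs" and left: "a = 0 \<or> a - 1 \<notin> filled h xs"
  shows "p - a \<le> card {x \<in> S. h x \<in> {a..<p}}"
proof -
  obtain P where P: "P ` S = filled h xs" "inj_on P S"
     "\<forall>x\<in>S. h x \<le> P x \<and> {h x..<P x} \<subseteq> filled h xs"
    using invariant[OF assms(1), of h] assms(2) by auto
  define K where "K = {x \<in> S. P x \<in> {a..<p}}"
  have "P ` K = {a..<p}"
  proof
    show "P ` K \<subseteq> {a..<p}" unfolding K_def by auto
    show "{a..<p} \<subseteq> P ` K"
    proof
      fix y assume y: "y \<in> {a..<p}"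
      then have "y \<in> P ` S" using P(1) sub by auto
      then obtain x where "x \<in> S" "y = P x" by auto
      then show "y \<in> P ` K" unfolding K_def using y by auto
    qed
  qed
  moreover have "inj_on P K" using P(2) unfolding K_def by (auto simp: inj_on_def)
  ultimately have cK: "card K = p - a" by (metis card_atLeastLessThan card_image)
  have "K \<subseteq> {x \<in> S. h x \<in> {a..<p}}"
  proof
    fix x assume x: "x \<in> K"
    then have xS: "x \<in> S" and Px: "a \<le> P x" "P x < p" unfolding K_def by auto
    have "h x \<le> P x" "{h x..<P x} \<subseteq> filled h xs" using P(3) xS by auto
    moreover have "a \<le> h x"
    proof (rule ccontr)
      assume "\<not> a \<le> h x"
      then have "a - 1 \<in> {h x..<P x}" using Px by auto
      then show False using left \<open>{h x..<P x} \<subseteq> filled h xs\<close> \<open>\<not> a \<le> h x\<close> by auto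
    qed
    ultimately show "x \<in> {x \<in> S. h x \<in> {a..<p}}" using xS Px by auto
  qed
  moreover have "finite S" using assms(2) by auto
  ultimately show ?thesis using cK by (metis (no_types, lifting) card_mono finite_subset mem_Collect_eq subsetI)
qed

theorem lemma3:
  fixes u t :: nat and h :: "nat \<Rightarrow> nat" and xs :: "nat list" and S :: "nat set"
    and q l a b :: nat
  assumes hash: "\<forall>x<u. h x < t"
    and order: "distinct xs" "set xs = S"
    and keys: "S \<subseteq> {..<u}"
    and query: "q < u"
    and run: "is_run (filled h xs) a b" "a \<le> h q" "h q < b"
    and len: "2 ^ (l + 2) \<le> b - a" "b - a < 2 ^ (l + 3)"
  shows "\<exists>j. h q div 2 ^ l \<le> j + 8 \<and> j \<le> h q div 2 ^ l + 3
             \<and> near_full h S q l (l_interval l j)"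
proof -
  define L :: nat where "L = 2 ^ l"
  have L0: "L > 0" unfolding L_def by simp
  have l4: "4 * L \<le> b - a" "b - a < 8 * L" using len unfolding L_def by (auto simp: power_add)
  define i where "i = a div L"
  have ia: "i * L \<le> a" "a < i * L + L" unfolding i_def using L0
    by (auto simp: div_times_less_eq_dividend) (metis add.commute div_mult_mod_eq mod_less_divisor nat_add_left_cancel_less)
  define p where "p = (i + 4) * L"
  have pb: "p \<le> b" unfolding p_def using ia l4 by (simp add: algebra_simps)
  have sub: "{a..<p} \<subseteq> filled h xs" using run(1) pb unfolding is_run_def by auto
  have left: "a = 0 \<or> a - 1 \<notin> filled h xs" using run(1) unfolding is_run_def by auto
  have c1: "p - a \<le> card {x \<in> S. h x \<in> {a..<p}}" by (rule run_count[OF order sub left])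
  have fS: "finite S" using order by auto
  define A where "A = (\<lambda>k. {x \<in> S - {q}. h x \<in> l_interval l k})"
  have "{x \<in> S. h x \<in> {a..<p}} \<subseteq> insert q (A i \<union> A (i+1) \<union> A (i+2) \<union> A (i+3))"
  proof
    fix x assume x: "x \<in> {x \<in> S. h x \<in> {a..<p}}"
    show "x \<in> insert q (A i \<union> A (i+1) \<union> A (i+2) \<union> A (i+3))"
    proof (cases "x = q")
      case False
      have "i * L \<le> h x" "h x < (i+4) * L" using x ia unfolding p_def by auto
      then have "h x < (i+1)*L \<or> ((i+1)*L \<le> h x \<and> h x < (i+2)*L) \<or>
          ((i+2)*L \<le> h x \<and> h x < (i+3)*L) \<or> ((i+3)*L \<le> h x \<and> h x < (i+4)*L)" by linarith
      then show ?thesis using x False \<open>i * L \<le> h x\<close>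
        unfolding A_def l_interval_def L_def[symmetric] by (auto simp: algebra_simps)
    qed simp
  qed
  have fA: "\<And>k. finite (A k)" unfolding A_def using fS by auto
  have "card {x \<in> S. h x \<in> {a..<p}} \<le> card (insert q (A i \<union> A (i+1) \<union> A (i+2) \<union> A (i+3)))"
    by (rule card_mono) (use fA \<open>{x \<in> S. h x \<in> {a..<p}} \<subseteq> _\<close> in auto)
  also have "\<dots> \<le> Suc (card (A i \<union> A (i+1) \<union> A (i+2) \<union> A (i+3)))" by (simp add: card_insert_if fA)
  also have "card (A i \<union> A (i+1) \<union> A (i+2) \<union> A (i+3)) \<le> card (A i) + card (A (i+1)) + card (A (i+2)) + card (A (i+3))"
    by (meson card_Un_le le_trans add_le_mono order_refl)
  finally have c2: "p - a \<le> Suc (card (A i) + card (A (i+1)) + card (A (i+2)) + card (A (i+3)))"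
    using c1 by linarith
  have pa: "p - a \<ge> 3 * L + 1" unfolding p_def using ia by (simp add: algebra_simps)
  have "\<exists>k\<in>{i, i+1, i+2, i+3}. 3 * L \<le> 4 * card (A k)"
  proof (rule ccontr)
    assume "\<not> ?thesis"
    then show False using c2 pa by auto
  qed
  then obtain k where k: "k \<in> {i, i+1, i+2, i+3}" "3 * L \<le> 4 * card (A k)" by blast
  have nf: "near_full h S q l (l_interval l k)"
  proof -
    have "real (3 * L) \<le> real (4 * card (A k))" using k(2) by linarith
    then have "3 / 4 * 2 ^ l \<le> real (card (A k))" unfolding L_def by simp
    then show ?thesis unfolding near_full_def A_def by simp
  qed
  have "i \<le> h q div L" unfolding i_def using run(2) by (rule div_le_mono)
  moreover have "h q div L \<le> i + 8"
  proof -
    have "h q < a + 8 * L" using run(3) l4 by linarith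
    then have "h q div L \<le> (a + 8 * L) div L" by (simp add: div_le_mono)
    also have "\<dots> = i + 8" unfolding i_def using L0 by simp
    finally show ?thesis .
  qed
  ultimately have "h q div 2 ^ l \<le> k + 8 \<and> k \<le> h q div 2 ^ l + 3"
    using k(1) unfolding L_def by auto
  then show ?thesis using nf by blast
qed

end
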